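(* Let $n_1<n_2<n_3$ be positive integers with $\gcd(n_1,n_2,n_3)=1$ minimally generating a nonsymmetric numerical semigroup $S$, with $\gcd(\delta_1,\delta_3)=1$. Let $\mathbf x\in\{\boldsymbol\lambda,\boldsymbol\mu\}$ and let $1\le i\le\max\{\delta_1,\delta_3\}$ be such that the B\'ezout couple $\mathbf x_i$ (of type $\mathbf x$) is reducible. Then there exists a positive integer $l<i$ such that $\tau_{\mathbf x_l}^-\le\tau_{\mathbf x_i}^-$ (componentwise), where $\mathbf x_l$ is the B\'ezout couple of $l$ of the same type.
   Context: $S=\langle n_1,n_2,n_3\rangle$; minimally generated means no $n_i$ lies in the submonoid generated by the other two; $S$ is symmetric if, with $F=\max(\mathbb Z\setminus S)$, $x\in\mathbb Z\setminus S$ implies $F-x\in S$. For $\{i,j,k\}=\{1,2,3\}$, $c_i=\min\{c\in\mathbb Z^+: cn_i\in\langle n_j,n_k\rangle\}$ and, $S$ being nonsymmetric, $r_{ij},r_{ik}$ are the unique positive integers with $c_in_i=r_{ij}n_j+r_{ik}n_k$; moreover $c_i=r_{ji}+r_{ki}$. Set $\delta_1=c_1-r_{12}-r_{13}>0$, $\delta_3=r_{31}+r_{32}-c_3>0$, $\mathbf v_1=(c_1,-r_{12},-r_{13})$, $\mathbf v_3=(r_{31},r_{32},-c_3)$. For $i\in\{1,\ldots,\max\{\delta_1,\delta_3\}\}$: $\boldsymbol\lambda_i$ is the unique $(a,b)\in\mathbb Z^2$ with $a\delta_1+b\delta_3=i$, $0<b\le\delta_1$; $\boldsymbol\mu_i$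 is the unique $(a,b)$ with $a\delta_1+b\delta_3=i$, $0<a\le\delta_3$. $\boldsymbol\lambda_i$ is reducible if $\boldsymbol\lambda_i=\boldsymbol\lambda_j+\boldsymbol\lambda_k$ for some $j,k\in\{1,\ldots,\max\{\delta_1,\delta_3\}\}$, and similarly for $\boldsymbol\mu_i$. For $(a,b)\in\mathbb Z^2$, $\tau_{(a,b)}=a\mathbf v_1+b\mathbf v_3\in\mathbb Z^3$. For $\mathbf z\in\mathbb Z^3$, $\mathbf z^+,\mathbf z^-\in\mathbb N^3$ are the unique vectors with $\mathbf z=\mathbf z^+-\mathbf z^-$ and $\mathbf z^+\cdot\mathbf z^-=0$. *)

theory Defs
  imports Main
begin

definition sgp3 :: "nat \<Rightarrow> nat \<Rightarrow> nat \<Rightarrow> int set" where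
  "sgp3 n1 n2 n3 = {int (a*n1 + b*n2 + c*n3) | a b c. True}"

definition mon2 :: "nat \<Rightarrow> nat \<Rightarrow> nat set" where
  "mon2 nj nk = {a*nj + b*nk | a b. True}"

definition min_generated :: "nat \<Rightarrow> nat \<Rightarrow> nat \<Rightarrow> bool" where
  "min_generated n1 n2 n3 \<longleftrightarrow>
     n1 \<notin> mon2 n2 n3 \<and> n2 \<notin> mon2 n1 n3 \<and> n3 \<notin> mon2 n1 n2"

definition frob :: "int set \<Rightarrow> int" where
  "frob S = (GREATEST x. x \<notin> S)"

definition symmetric_sg :: "int set \<Rightarrow> bool" where
  "symmetric_sg S \<longleftrightarrow> (\<forall>x. x \<notin> S \<longrightarrow> frob S - x \<in> S)"

definition cc :: "nat \<Rightarrow> nat \<Rightarrow> nat \<Rightarrow> nat" where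
  "cc ni nj nk = (LEAST c. c > 0 \<and> c * ni \<in> mon2 nj nk)"

definition rr :: "nat \<Rightarrow> nat \<Rightarrow> nat \<Rightarrow> nat \<times> nat" where
  "rr ni nj nk = (THE (p, q). p > 0 \<and> q > 0 \<and> cc ni nj nk * ni = p * nj + q * nk)"

definition c1 :: "nat \<Rightarrow> nat \<Rightarrow> nat \<Rightarrow> int" where
  "c1 n1 n2 n3 = int (cc n1 n2 n3)"
definition r12 :: "nat \<Rightarrow> nat \<Rightarrow> nat \<Rightarrow> int" where
  "r12 n1 n2 n3 = int (fst (rr n1 n2 n3))"
definition r13 :: "nat \<Rightarrow> nat \<Rightarrow> nat \<Rightarrow> int" where
  "r13 n1 n2 n3 = int (snd (rr n1 n2 n3))"
definition c3 :: "nat \<Rightarrow> nat \<Rightarrow> nat \<Rightarrow> int" where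
  "c3 n1 n2 n3 = int (cc n3 n1 n2)"
definition r31 :: "nat \<Rightarrow> nat \<Rightarrow> nat \<Rightarrow> int" where
  "r31 n1 n2 n3 = int (fst (rr n3 n1 n2))"
definition r32 :: "nat \<Rightarrow> nat \<Rightarrow> nat \<Rightarrow> int" where
  "r32 n1 n2 n3 = int (snd (rr n3 n1 n2))"

definition delta1 :: "nat \<Rightarrow> nat \<Rightarrow> nat \<Rightarrow> int" where
  "delta1 n1 n2 n3 = c1 n1 n2 n3 - r12 n1 n2 n3 - r13 n1 n2 n3"
definition delta3 :: "nat \<Rightarrow> nat \<Rightarrow> nat \<Rightarrow> int" where
  "delta3 n1 n2 n3 = r31 n1 n2 n3 + r32 n1 n2 n3 - c3 n1 n2 n3"

definition lam :: "nat \<Rightarrow> nat \<Rightarrow> nat \<Rightarrow> int \<Rightarrow> int \<times> int" where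
  "lam n1 n2 n3 i = (THE (a, b). a * delta1 n1 n2 n3 + b * delta3 n1 n2 n3 = i
                          \<and> 0 < b \<and> b \<le> delta1 n1 n2 n3)"

definition mu :: "nat \<Rightarrow> nat \<Rightarrow> nat \<Rightarrow> int \<Rightarrow> int \<times> int" where
  "mu n1 n2 n3 i = (THE (a, b). a * delta1 n1 n2 n3 + b * delta3 n1 n2 n3 = i
                          \<and> 0 < a \<and> a \<le> delta3 n1 n2 n3)"

definition reducible :: "int \<Rightarrow> (int \<Rightarrow> int \<times> int) \<Rightarrow> int \<Rightarrow> bool" where
  "reducible M x i \<longleftrightarrow> (\<exists>j k. j \<in> {1..M} \<and> k \<in> {1..M} \<and>
      fst (x i) = fst (x j) + fst (x k) \<and> snd (x i) = snd (x j) + snd (x k))"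

definition tau :: "nat \<Rightarrow> nat \<Rightarrow> nat \<Rightarrow> int \<times> int \<Rightarrow> int \<times> int \<times> int" where
  "tau n1 n2 n3 ab = (let a = fst ab; b = snd ab in
     (a * c1 n1 n2 n3 + b * r31 n1 n2 n3,
      - a * r12 n1 n2 n3 + b * r32 n1 n2 n3,
      - a * r13 n1 n2 n3 - b * c3 n1 n2 n3))"

definition negpart :: "int \<times> int \<times> int \<Rightarrow> int \<times> int \<times> int" where
  "negpart z = (case z of (x, y, w) \<Rightarrow> (max (- x) 0, max (- y) 0, max (- w) 0))"

definition le3 :: "int \<times> int \<times> int \<Rightarrow> int \<times> int \<times> int \<Rightarrow> bool" where
  "le3 u v \<longleftrightarrow> fst u \<le> fst v \<and> fst (snd u) \<le> fst (snd v) \<and> snd (snd u) \<le> snd (snd v)"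

end

theory Submission
  imports Defs
begin


lemma rep_lemma:
  fixes a b x :: int
  assumes "a \<ge> 1" "b \<ge> 1" "coprime a b"
  shows "\<exists>u v. 0 \<le> u \<and> u < b \<and> x = u*a + v*b"
proof -
  have "gcd a b = 1" using assms(3) by (simp add: coprime_iff_gcd_eq_1)
  then obtain s t where st: "s*a + t*b = 1" using bezout_int[of a b] by auto
  define u where "u = (x*s) mod b"
  define k where "k = (x*s) div b"
  have xs: "x*s = k*b + u" unfolding u_def k_def by simp
  have "x = x*(s*a + t*b)" using st by simp
  also have "\<dots> = (x*s)*a + (x*t)*b" by (simp add: algebra_simps)
  also have "\<dots> = u*a + (k*a + x*t)*b" unfolding xs by (simp add: algebra_simps)
  finally have "x = u*a + (k*a + x*t)*b" .
  moreover have "0 \<le> u" "u < b" unfolding u_def using assms by auto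
  ultimately show ?thesis by blast
qed

lemma twogen_sym:
  fixes a b x :: int
  assumes "a \<ge> 1" "b \<ge> 1" "coprime a b"
    "\<not>(\<exists>u v. u \<ge> 0 \<and> v \<ge> 0 \<and> x = u*a + v*b)"
  shows "\<exists>u v. u \<ge> 0 \<and> v \<ge> 0 \<and> a*b - a - b - x = u*a + v*b"
proof -
  obtain u v where uv: "0 \<le> u" "u < b" "x = u*a + v*b" using rep_lemma[OF assms(1-3)] by blast
  have "v < 0"
  proof (rule ccontr)
    assume "\<not> v < 0"
    hence "\<exists>u v. u \<ge> 0 \<and> v \<ge> 0 \<and> x = u*a + v*b" using uv by (intro exI[of _ u] exI[of _ v]) auto
    with assms(4) show False by blast
  qed
  have "a*b - a - b - x = (b-1-u)*a + (-1-v)*b" using uv(3) by (simp add: algebra_simps)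
  thus ?thesis using uv \<open>v<0\<close> by (intro exI[of _ "b-1-u"] exI[of _ "-1-v"]) auto
qed

lemma twogen_frob_notin:
  fixes a b :: int
  assumes "a \<ge> 1" "b \<ge> 1" "coprime a b"
  shows "\<not>(\<exists>u v. u \<ge> 0 \<and> v \<ge> 0 \<and> a*b - a - b = u*a + v*b)"
proof
  assume "\<exists>u v. u \<ge> 0 \<and> v \<ge> 0 \<and> a*b - a - b = u*a + v*b"
  then obtain u v where uv: "u \<ge> 0" "v \<ge> 0" "a*b - a - b = u*a + v*b" by blast
  have e: "(u+1)*a + (v+1)*b = a*b" using uv(3) by (simp add: algebra_simps)
  have "b dvd (u+1)*a" using e by (metis add_diff_cancel_right' dvd_diff dvd_triv_left dvd_triv_right mult.commute)
  hence "b dvd u+1" using assms(3) by (simp add: coprime_commute coprime_dvd_mult_left_iff)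
  hence bu: "b \<le> u+1" using uv(1) by (simp add: zdvd_imp_le)
  have "a dvd (v+1)*b" using e by (metis add_diff_cancel_left' dvd_diff dvd_triv_left dvd_triv_right)
  hence "a dvd v+1" using assms(3) by (simp add: coprime_dvd_mult_left_iff)
  hence av: "a \<le> v+1" using uv(2) by (simp add: zdvd_imp_le)
  have "b*a \<le> (u+1)*a" using bu assms by (intro mult_right_mono) auto
  moreover have "a*b \<le> (v+1)*b" using av assms by (intro mult_right_mono) auto
  moreover have "a*b > 0" using assms by simp
  ultimately show False using e by (simp add: algebra_simps)
qed

lemma sgp3_iff:
  "x \<in> sgp3 g1 g2 g3 \<longleftrightarrow> (\<exists>\<alpha> \<beta> \<gamma>::int. \<alpha> \<ge> 0 \<and> \<beta> \<ge> 0 \<and> \<gamma> \<ge> 0 \<and> x = \<alpha>*int g1 + \<beta>*int g2 + \<gamma>*int g3)"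
proof
  assume "x \<in> sgp3 g1 g2 g3"
  then obtain a b c where "x = int (a*g1 + b*g2 + c*g3)" unfolding sgp3_def by blast
  thus "\<exists>\<alpha> \<beta> \<gamma>::int. \<alpha> \<ge> 0 \<and> \<beta> \<ge> 0 \<and> \<gamma> \<ge> 0 \<and> x = \<alpha>*int g1 + \<beta>*int g2 + \<gamma>*int g3"
    by (intro exI[of _ "int a"] exI[of _ "int b"] exI[of _ "int c"]) auto
next
  assume "\<exists>\<alpha> \<beta> \<gamma>::int. \<alpha> \<ge> 0 \<and> \<beta> \<ge> 0 \<and> \<gamma> \<ge> 0 \<and> x = \<alpha>*int g1 + \<beta>*int g2 + \<gamma>*int g3"
  then obtain \<alpha> \<beta> \<gamma> :: int where h: "\<alpha> \<ge> 0" "\<beta> \<ge> 0" "\<gamma> \<ge> 0" "x = \<alpha>*int g1 + \<beta>*int g2 + \<gamma>*int g3" by blast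
  have "x = int (nat \<alpha>*g1 + nat \<beta>*g2 + nat \<gamma>*g3)" using h by simp
  thus "x \<in> sgp3 g1 g2 g3" unfolding sgp3_def by blast
qed

lemma sgp3_nonneg: "x \<in> sgp3 g1 g2 g3 \<Longrightarrow> x \<ge> 0"
  unfolding sgp3_def by auto

lemma sgp3_perm1: "sgp3 a b c = sgp3 b a c"
proof (rule set_eqI)
  fix x show "x \<in> sgp3 a b c \<longleftrightarrow> x \<in> sgp3 b a c"
    unfolding sgp3_iff
  proof
    assume "\<exists>\<alpha> \<beta> \<gamma>::int. \<alpha> \<ge> 0 \<and> \<beta> \<ge> 0 \<and> \<gamma> \<ge> 0 \<and> x = \<alpha>*int a + \<beta>*int b + \<gamma>*int c"
    then obtain \<alpha> \<beta> \<gamma> :: int where h: "\<alpha> \<ge> 0" "\<beta> \<ge> 0" "\<gamma> \<ge> 0" "x = \<alpha>*int a + \<beta>*int b + \<gamma>*int c" by blast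
    show "\<exists>\<alpha> \<beta> \<gamma>::int. \<alpha> \<ge> 0 \<and> \<beta> \<ge> 0 \<and> \<gamma> \<ge> 0 \<and> x = \<alpha>*int b + \<beta>*int a + \<gamma>*int c"
      using h by (intro exI[of _ \<beta>] exI[of _ \<alpha>] exI[of _ \<gamma>]) simp
  next
    assume "\<exists>\<alpha> \<beta> \<gamma>::int. \<alpha> \<ge> 0 \<and> \<beta> \<ge> 0 \<and> \<gamma> \<ge> 0 \<and> x = \<alpha>*int b + \<beta>*int a + \<gamma>*int c"
    then obtain \<alpha> \<beta> \<gamma> :: int where h: "\<alpha> \<ge> 0" "\<beta> \<ge> 0" "\<gamma> \<ge> 0" "x = \<alpha>*int b + \<beta>*int a + \<gamma>*int c" by blast
    show "\<exists>\<alpha> \<beta> \<gamma>::int. \<alpha> \<ge> 0 \<and> \<beta> \<ge> 0 \<and> \<gamma> \<ge> 0 \<and> x = \<alpha>*int a + \<beta>*int b + \<gamma>*int c"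
      using h by (intro exI[of _ \<beta>] exI[of _ \<alpha>] exI[of _ \<gamma>]) simp
  qed
qed

lemma sgp3_perm2: "sgp3 a b c = sgp3 a c b"
proof (rule set_eqI)
  fix x show "x \<in> sgp3 a b c \<longleftrightarrow> x \<in> sgp3 a c b"
    unfolding sgp3_iff
  proof
    assume "\<exists>\<alpha> \<beta> \<gamma>::int. \<alpha> \<ge> 0 \<and> \<beta> \<ge> 0 \<and> \<gamma> \<ge> 0 \<and> x = \<alpha>*int a + \<beta>*int b + \<gamma>*int c"
    then obtain \<alpha> \<beta> \<gamma> :: int where h: "\<alpha> \<ge> 0" "\<beta> \<ge> 0" "\<gamma> \<ge> 0" "x = \<alpha>*int a + \<beta>*int b + \<gamma>*int c" by blast
    show "\<exists>\<alpha> \<beta> \<gamma>::int. \<alpha> \<ge> 0 \<and> \<beta> \<ge> 0 \<and> \<gamma> \<ge> 0 \<and> x = \<alpha>*int a + \<beta>*int c + \<gamma>*int b"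
      using h by (intro exI[of _ \<alpha>] exI[of _ \<gamma>] exI[of _ \<beta>]) simp
  next
    assume "\<exists>\<alpha> \<beta> \<gamma>::int. \<alpha> \<ge> 0 \<and> \<beta> \<ge> 0 \<and> \<gamma> \<ge> 0 \<and> x = \<alpha>*int a + \<beta>*int c + \<gamma>*int b"
    then obtain \<alpha> \<beta> \<gamma> :: int where h: "\<alpha> \<ge> 0" "\<beta> \<ge> 0" "\<gamma> \<ge> 0" "x = \<alpha>*int a + \<beta>*int c + \<gamma>*int b" by blast
    show "\<exists>\<alpha> \<beta> \<gamma>::int. \<alpha> \<ge> 0 \<and> \<beta> \<ge> 0 \<and> \<gamma> \<ge> 0 \<and> x = \<alpha>*int a + \<beta>*int b + \<gamma>*int c"
      using h by (intro exI[of _ \<alpha>] exI[of _ \<gamma>] exI[of _ \<beta>]) simp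
  qed
qed

lemma mon2_comm: "mon2 a b = mon2 b a"
  unfolding mon2_def by (auto intro: exI[where x=0]) (metis add.commute)+



lemma pure_sym:
  fixes g1 g2 g3 c p :: nat
  assumes pos: "0<g1" "0<g2" "0<g3" and gc: "gcd (gcd g1 g2) g3 = 1"
   and cp: "0 < c" "c*g1 = p*g2" and mn: "\<forall>c'. 0<c' \<and> c'<c \<longrightarrow> c'*g1 \<notin> mon2 g2 g3"
  shows "symmetric_sg (sgp3 g1 g2 g3)"
proof -
  define d where "d = gcd g1 g2"
  have d0: "d > 0" unfolding d_def using pos by simp
  define a where "a = g1 div d"
  define b where "b = g2 div d"
  have g1: "g1 = d*a" unfolding a_def d_def by simp
  have g2: "g2 = d*b" unfolding b_def d_def by simp
  have cab: "coprime a b" unfolding a_def b_def d_def using pos by (intro div_gcd_coprime) auto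
  have a1: "a \<ge> 1" using g1 pos by (cases a) auto
  have b1: "b \<ge> 1" using g2 pos by (cases b) auto
  have "c*a = p*b" using cp(2) d0 unfolding g1 g2 by (simp add: algebra_simps)
  hence "b dvd c*a" by (metis dvd_triv_right)
  hence "b dvd c" using cab by (simp add: coprime_commute coprime_dvd_mult_left_iff)
  hence "b \<le> c" using cp(1) by (simp add: dvd_imp_le)
  hence mnb: "\<forall>u. 0<u \<and> u<b \<longrightarrow> u*g1 \<notin> mon2 g2 g3" using mn by auto
  have dg3: "coprime d g3" using gc unfolding d_def by (simp add: coprime_iff_gcd_eq_1)
  define A where "A = int a"
  define B where "B = int b"
  define D where "D = int d"
  define G where "G = int g3"
  have A1: "A \<ge> 1" and B1: "B \<ge> 1" and D1: "D \<ge> 1" and G1: "G \<ge> 1"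
    using a1 b1 d0 pos unfolding A_def B_def D_def G_def by auto
  have cAB: "coprime A B" using cab unfolding A_def B_def by simp
  have cDG: "coprime D G" using dg3 unfolding D_def G_def by simp
  obtain e f where ef: "e \<ge> 0" "f \<ge> 0" "G = e*A + f*B"
  proof -
    obtain u v where uv: "0 \<le> u" "u < B" "G = u*A + v*B" using rep_lemma[OF A1 B1 cAB] by blast
    have "v \<ge> 0"
    proof (rule ccontr)
      assume "\<not> v \<ge> 0"
      have "u > 0"
      proof (rule ccontr)
        assume "\<not> u > 0" hence "G = v*B" using uv by simp
        moreover have "v*B < 0" using \<open>\<not> v \<ge> 0\<close> B1 by (simp add: mult_neg_pos)
        ultimately show False using G1 by simp
      qed
      have "int (nat u * g1) = int (d*g3 + nat (-v) * g2)"
        using uv \<open>\<not> v \<ge> 0\<close> unfolding g1 g2 A_def B_def G_def by (simp add: algebra_simps)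
      hence "nat u * g1 = d*g3 + nat (-v) * g2" by (simp only: of_nat_eq_iff)
      hence "nat u * g1 \<in> mon2 g2 g3" unfolding mon2_def by (intro CollectI exI[of _ "nat (-v)"] exI[of _ d]) simp
      moreover have "0 < nat u" "nat u < b" using \<open>u>0\<close> uv(2) unfolding B_def by auto
      ultimately show False using mnb by blast
    qed
    thus ?thesis using that uv by blast
  qed
  define S where "S = sgp3 g1 g2 g3"
  have Siff: "\<And>x. x \<in> S \<longleftrightarrow> (\<exists>\<alpha> \<beta> \<gamma>::int. \<alpha> \<ge> 0 \<and> \<beta> \<ge> 0 \<and> \<gamma> \<ge> 0 \<and> x = \<alpha>*(D*A) + \<beta>*(D*B) + \<gamma>*G)"
    unfolding S_def sgp3_iff g1 g2 A_def B_def D_def G_def by simp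
  define fT where "fT = A*B - A - B"
  define F0 where "F0 = D*fT + (D-1)*G"
  have notin: "F0 \<notin> S"
  proof
    assume "F0 \<in> S"
    then obtain \<alpha> \<beta> \<gamma> :: int where h: "\<alpha> \<ge> 0" "\<beta> \<ge> 0" "\<gamma> \<ge> 0" "F0 = \<alpha>*(D*A) + \<beta>*(D*B) + \<gamma>*G"
      using Siff by blast
    have e1: "(\<gamma>+1)*G = D*(fT + G - \<alpha>*A - \<beta>*B)" using h(4) unfolding F0_def by (simp add: algebra_simps)
    hence "D dvd (\<gamma>+1)*G" by (metis dvd_triv_left)
    hence "D dvd \<gamma>+1" using cDG by (simp add: coprime_dvd_mult_left_iff)
    then obtain m where m: "\<gamma>+1 = D*m" by (auto elim: dvdE)
    have "D*m > 0" using m h(3) by simp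
    hence "m > 0" using D1 by (simp add: zero_less_mult_iff)
    have "D*(m*G) = (\<gamma>+1)*G" using m by (simp add: algebra_simps)
    hence "D*(m*G) = D*(fT + G - \<alpha>*A - \<beta>*B)" using e1 by simp
    hence "m*G = fT + G - \<alpha>*A - \<beta>*B" using D1 by simp
    hence "fT = (\<alpha> + (m-1)*e)*A + (\<beta> + (m-1)*f)*B" using ef(3) by (simp add: algebra_simps)
    moreover have "\<alpha> + (m-1)*e \<ge> 0" "\<beta> + (m-1)*f \<ge> 0" using h ef \<open>m>0\<close> by auto
    ultimately show False using twogen_frob_notin[OF A1 B1 cAB] unfolding fT_def by blast
  qed
  have symp: "F0 - x \<in> S" if "x \<notin> S" for x
  proof -
    have "gcd G D = 1" using cDG by (simp add: coprime_iff_gcd_eq_1 gcd.commute)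
    then obtain s t where st: "s*G + t*D = 1" using bezout_int[of G D] by auto
    define g0 where "g0 = (x*s) mod D"
    define q where "q = (x*s) div D"
    have xs: "x*s = q*D + g0" unfolding g0_def q_def by simp
    have g0b: "0 \<le> g0" "g0 < D" unfolding g0_def using D1 by auto
    have "x = x*(s*G + t*D)" using st by simp
    also have "\<dots> = (x*s)*G + x*t*D" by (simp add: algebra_simps)
    finally have xe: "x = D*(x*t + q*G) + g0*G" unfolding xs by (simp add: algebra_simps)
    define y where "y = x*t + q*G"
    have "\<not>(\<exists>u v. u \<ge> 0 \<and> v \<ge> 0 \<and> y = u*A + v*B)"
    proof
      assume "\<exists>u v. u \<ge> 0 \<and> v \<ge> 0 \<and> y = u*A + v*B"
      then obtain u v where "u \<ge> 0" "v \<ge> 0" "y = u*A + v*B" by blast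
      hence "x = u*(D*A) + v*(D*B) + g0*G" using xe unfolding y_def by (simp add: algebra_simps)
      hence "x \<in> S" using Siff \<open>u\<ge>0\<close> \<open>v\<ge>0\<close> g0b by blast
      with that show False by simp
    qed
    then obtain u v where uv: "u \<ge> 0" "v \<ge> 0" "A*B - A - B - y = u*A + v*B"
      using twogen_sym[OF A1 B1 cAB] by blast
    have "F0 - x = u*(D*A) + v*(D*B) + (D-1-g0)*G"
    proof -
      have "F0 - x = D*(fT - y) + (D-1-g0)*G" unfolding F0_def using xe unfolding y_def by (simp add: algebra_simps)
      also have "\<dots> = D*(u*A+v*B) + (D-1-g0)*G" using uv(3) unfolding fT_def by simp
      finally show ?thesis by (simp add: algebra_simps)
    qed
    moreover have "D-1-g0 \<ge> 0" using g0b by simp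
    ultimately show ?thesis unfolding Siff using uv by blast
  qed
  have fr: "frob S = F0"
    unfolding frob_def
  proof (rule Greatest_equality)
    show "F0 \<notin> S" by (rule notin)
    fix y assume "y \<notin> S"
    hence "F0 - y \<in> S" by (rule symp)
    hence "F0 - y \<ge> 0" unfolding S_def by (rule sgp3_nonneg)
    thus "y \<le> F0" by simp
  qed
  show ?thesis unfolding symmetric_sg_def S_def[symmetric] fr using symp by blast
qed



definition ok :: "nat \<Rightarrow> nat \<Rightarrow> nat \<Rightarrow> bool" where
  "ok g1 g2 g3 \<longleftrightarrow> 0<g1 \<and> 0<g2 \<and> 0<g3 \<and> gcd (gcd g1 g2) g3 = 1 \<and> \<not> symmetric_sg (sgp3 g1 g2 g3)"

lemma ok_perm1: "ok a b c \<Longrightarrow> ok b a c"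
  unfolding ok_def by (simp add: sgp3_perm1[of a b c] gcd.commute)
lemma ok_perm2: "ok a b c \<Longrightarrow> ok a c b"
  unfolding ok_def by (simp add: sgp3_perm2[of a b c] gcd.commute gcd.left_commute gcd.assoc)

lemma cc_facts:
  assumes "0 < g1" "0 < g2"
  shows "cc g1 g2 g3 > 0" "cc g1 g2 g3 * g1 \<in> mon2 g2 g3"
    "\<And>c'. 0<c' \<Longrightarrow> c' < cc g1 g2 g3 \<Longrightarrow> c'*g1 \<notin> mon2 g2 g3"
proof -
  have "g2 * g1 = g1*g2 + 0*g3" by simp
  hence P: "g2 > 0 \<and> g2 * g1 \<in> mon2 g2 g3" using assms unfolding mon2_def by blast
  show "cc g1 g2 g3 > 0" "cc g1 g2 g3 * g1 \<in> mon2 g2 g3"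
    unfolding cc_def using LeastI[of "\<lambda>c. c > 0 \<and> c * g1 \<in> mon2 g2 g3", OF P] by auto
  fix c' assume "0<c'" "c' < cc g1 g2 g3"
  thus "c'*g1 \<notin> mon2 g2 g3" unfolding cc_def using not_less_Least by blast
qed

lemma cc_min:
  assumes "0 < g1" "0 < g2" "0<c'" "c' < cc g1 g2 g3"
  shows "c'*g1 \<notin> mon2 g2 g3"
  using cc_facts(3)[OF assms(1,2)] assms(3,4) by blast

lemma no_pure:
  assumes "ok g1 g2 g3" "cc g1 g2 g3 * g1 = p*g2 + q*g3"
  shows "0 < p" "0 < q"
proof -
  have o: "0<g1" "0<g2" "0<g3" "gcd (gcd g1 g2) g3 = 1" "\<not> symmetric_sg (sgp3 g1 g2 g3)"
    using assms(1) unfolding ok_def by auto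
  note cf = cc_facts[of g1 g2 g3, OF o(1) o(2)]
  have mn: "\<forall>c'. 0<c' \<and> c'<cc g1 g2 g3 \<longrightarrow> c'*g1 \<notin> mon2 g2 g3" using cc_min[OF o(1) o(2)] by blast
  have mn2: "\<forall>c'. 0<c' \<and> c'<cc g1 g2 g3 \<longrightarrow> c'*g1 \<notin> mon2 g3 g2" using mn mon2_comm[of g2 g3] by simp
  show "0 < q"
  proof (rule ccontr)
    assume "\<not> 0 < q"
    hence "cc g1 g2 g3 * g1 = p*g2" using assms(2) by simp
    hence "symmetric_sg (sgp3 g1 g2 g3)" using pure_sym[OF o(1-4) cf(1) _ mn] by blast
    with o(5) show False by simp
  qed
  show "0 < p"
  proof (rule ccontr)
    assume "\<not> 0 < p"
    hence e: "cc g1 g2 g3 * g1 = q*g3" using assms(2) by simp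
    have o2: "ok g1 g3 g2" using ok_perm2 assms(1) by blast
    have "gcd (gcd g1 g3) g2 = 1" using o2 unfolding ok_def by simp
    hence "symmetric_sg (sgp3 g1 g3 g2)" by (rule pure_sym[OF o(1) o(3) o(2) _ cf(1) e mn2])
    with o(5) show False by (simp add: sgp3_perm2[of g1 g2 g3])
  qed
qed

lemma rep_bound:
  assumes "ok g1 g2 g3" "cc g1 g2 g3 * g1 = p*g2 + q*g3"
  shows "p < cc g2 g1 g3"
proof (rule ccontr)
  assume npl: "\<not> p < cc g2 g1 g3"
  have o: "0<g1" "0<g2" "0<g3"
    using assms(1) unfolding ok_def by auto
  have o2: "ok g2 g1 g3" using ok_perm1 assms(1) by blast
  define c1 where "c1 = cc g1 g2 g3"
  define c2 where "c2 = cc g2 g1 g3"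
  note cf1 = cc_facts[of g1 g2 g3, OF o(1) o(2)]
  note cf2 = cc_facts[of g2 g1 g3, OF o(2) o(1)]
  obtain r s where rs: "c2 * g2 = r*g1 + s*g3" using cf2(2) unfolding mon2_def c2_def by blast
  have r0: "0 < r" "0 < s" using no_pure[OF o2] rs unfolding c2_def by auto
  have pc: "p \<ge> c2" using npl unfolding c2_def by simp
  have e: "c1*g1 = (p-c2)*g2 + r*g1 + (s+q)*g3"
  proof -
    have "p*g2 = (p-c2)*g2 + c2*g2" using pc by (simp add: add_mult_distrib[symmetric])
    thus ?thesis using assms(2) rs unfolding c1_def by (simp add: algebra_simps)
  qed
  show False
  proof (cases "r < c1")
    case True
    have "(c1 - r)*g1 = (p-c2)*g2 + (s+q)*g3" using e True by (simp add: diff_mult_distrib)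
    hence "(c1 - r)*g1 \<in> mon2 g2 g3" unfolding mon2_def by blast
    moreover have "0 < c1 - r" "c1 - r < c1" using True r0 by auto
    ultimately show False using cc_min[OF o(1) o(2)] unfolding c1_def by blast
  next
    case False
    have "c1*g1 \<le> r*g1" using False by simp
    moreover have "(s+q)*g3 > 0" using r0 o by simp
    ultimately show False using e by linarith
  qed
qed

lemma rr_facts:
  assumes "ok g1 g2 g3"
  shows "0 < fst (rr g1 g2 g3)" "0 < snd (rr g1 g2 g3)"
    "cc g1 g2 g3 * g1 = fst (rr g1 g2 g3) * g2 + snd (rr g1 g2 g3) * g3"
proof -
  have o: "0<g1" "0<g2" "0<g3" using assms unfolding ok_def by auto
  note cf1 = cc_facts[of g1 g2 g3, OF o(1) o(2)]
  obtain p q where pq: "cc g1 g2 g3 * g1 = p*g2 + q*g3" using cf1(2) unfolding mon2_def by blast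
  have pq0: "0<p" "0<q" using no_pure[OF assms pq] by auto
  have uniq: "p' = p \<and> q' = q" if h: "cc g1 g2 g3 * g1 = p'*g2 + q'*g3" for p' q'
  proof -
    have gen: "False" if a: "cc g1 g2 g3 * g1 = x*g2 + y*g3" "cc g1 g2 g3 * g1 = x'*g2 + y'*g3" "x < x'" for x y x' y'
    proof -
      have "(x'-x)*g2 + x*g2 + y'*g3 = x*g2 + y*g3" using a by (simp add: add_mult_distrib[symmetric])
      hence e: "(x'-x)*g2 + y'*g3 = y*g3" by simp
      have "(x'-x)*g2 > 0" using a(3) o by simp
      hence "y'*g3 < y*g3" using e by linarith
      hence "y' < y" by simp
      hence "(x'-x)*g2 = (y-y')*g3" using e by (simp add: diff_mult_distrib)
      hence "(x'-x)*g2 \<in> mon2 g1 g3" unfolding mon2_def by (intro CollectI exI[of _ 0] exI[of _ "y-y'"]) simp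
      hence "\<not> (x'-x) < cc g2 g1 g3" using cc_min[OF o(2) o(1), of "x'-x" g3] a(3) by auto
      moreover have "x' < cc g2 g1 g3" using rep_bound[OF assms a(2)] .
      ultimately show False by simp
    qed
    have "p' = p" using gen[OF pq h] gen[OF h pq] by (meson linorder_neqE_nat)
    thus ?thesis using h pq o by simp
  qed
  have "\<exists>!pq. case pq of (p, q) \<Rightarrow> p > 0 \<and> q > 0 \<and> cc g1 g2 g3 * g1 = p * g2 + q * g3"
  proof (rule ex1I[of _ "(p,q)"])
    show "case (p,q) of (p, q) \<Rightarrow> p > 0 \<and> q > 0 \<and> cc g1 g2 g3 * g1 = p * g2 + q * g3"
      using pq pq0 by simp
    fix pq' :: "nat \<times> nat"
    assume h: "case pq' of (p, q) \<Rightarrow> p > 0 \<and> q > 0 \<and> cc g1 g2 g3 * g1 = p * g2 + q * g3"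
    obtain u v where "pq' = (u,v)" by (cases pq')
    with h uniq[of u v] show "pq' = (p,q)" by simp
  qed
  hence "case rr g1 g2 g3 of (p, q) \<Rightarrow> p > 0 \<and> q > 0 \<and> cc g1 g2 g3 * g1 = p * g2 + q * g3"
    unfolding rr_def by (rule theI')
  thus "0 < fst (rr g1 g2 g3)" "0 < snd (rr g1 g2 g3)"
    "cc g1 g2 g3 * g1 = fst (rr g1 g2 g3) * g2 + snd (rr g1 g2 g3) * g3"
    by (auto split: prod.splits)
qed



lemma bez_exists:
  fixes D1 D3 i :: int
  assumes "D1 > 0" "D3 > 0" "gcd D1 D3 = 1"
  shows "\<exists>a b. a*D1 + b*D3 = i \<and> 0 < b \<and> b \<le> D1"
proof -
  obtain u v where uv: "u*D1 + v*D3 = 1" using bezout_int[of D1 D3] assms(3) by auto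
  define b0 where "b0 = i*v"
  define b where "b = (b0 - 1) mod D1 + 1"
  define k where "k = (b0 - 1) div D1"
  have bk: "b0 = k*D1 + b" unfolding b_def k_def by simp
  have "(i*u + k*D3)*D1 + b*D3 = i*(u*D1 + v*D3)"
    using bk unfolding b0_def by (simp add: algebra_simps)
  also have "\<dots> = i" using uv by simp
  finally have "(i*u + k*D3)*D1 + b*D3 = i" .
  moreover have "(b0-1) mod D1 < D1" "(b0-1) mod D1 \<ge> 0" using assms(1) by simp_all
  hence "0 < b" "b \<le> D1" unfolding b_def by auto
  ultimately show ?thesis by blast
qed

lemma bez_unique:
  fixes D1 D3 a b a' b' :: int
  assumes "D1 > 0" "gcd D1 D3 = 1" "a*D1 + b*D3 = a'*D1 + b'*D3"
    "0 < b" "b \<le> D1" "0 < b'" "b' \<le> D1"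
  shows "a = a' \<and> b = b'"
proof -
  have "(b - b')*D3 = (a' - a)*D1" using assms(3) by (simp add: algebra_simps)
  hence "D1 dvd (b-b')*D3" by (metis dvd_triv_right)
  moreover have "coprime D1 D3" using assms(2) by (simp add: coprime_iff_gcd_eq_1)
  ultimately have dv: "D1 dvd (b-b')" by (simp add: coprime_dvd_mult_left_iff)
  have "b = b'"
  proof (rule ccontr)
    assume "b \<noteq> b'"
    hence "\<bar>D1\<bar> \<le> \<bar>b-b'\<bar>" using dv by (intro dvd_imp_le_int) auto
    thus False using assms by auto
  qed
  moreover hence "a*D1 = a'*D1" using assms(3) by simp
  ultimately show ?thesis using assms(1) by simp
qed

lemma lam_facts:
  assumes "delta1 n1 n2 n3 > 0" "delta3 n1 n2 n3 > 0" "gcd (delta1 n1 n2 n3) (delta3 n1 n2 n3) = 1"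
  shows "fst (lam n1 n2 n3 i) * delta1 n1 n2 n3 + snd (lam n1 n2 n3 i) * delta3 n1 n2 n3 = i
     \<and> 0 < snd (lam n1 n2 n3 i) \<and> snd (lam n1 n2 n3 i) \<le> delta1 n1 n2 n3"
proof -
  define D1 where "D1 = delta1 n1 n2 n3"
  define D3 where "D3 = delta3 n1 n2 n3"
  have a: "D1 > 0" "D3 > 0" "gcd D1 D3 = 1" using assms unfolding D1_def D3_def by auto
  obtain a b where ab: "a*D1 + b*D3 = i" "0 < b" "b \<le> D1" using bez_exists[OF a] by blast
  have "\<exists>!p. case p of (a, b) \<Rightarrow> a*D1 + b*D3 = i \<and> 0 < b \<and> b \<le> D1"
  proof (rule ex1I[of _ "(a,b)"])
    show "case (a,b) of (a, b) \<Rightarrow> a*D1 + b*D3 = i \<and> 0 < b \<and> b \<le> D1" using ab by simp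
    fix p :: "int \<times> int"
    assume h: "case p of (a, b) \<Rightarrow> a*D1 + b*D3 = i \<and> 0 < b \<and> b \<le> D1"
    obtain u v where p: "p = (u,v)" by (cases p)
    have "u = a \<and> v = b" using h ab unfolding p by (intro bez_unique[OF a(1) a(3)]) auto
    thus "p = (a,b)" using p by simp
  qed
  hence "case lam n1 n2 n3 i of (a, b) \<Rightarrow> a*D1 + b*D3 = i \<and> 0 < b \<and> b \<le> D1"
    unfolding lam_def D1_def D3_def by (rule theI')
  thus ?thesis unfolding D1_def D3_def by (auto split: prod.splits)
qed

lemma mu_facts:
  assumes "delta1 n1 n2 n3 > 0" "delta3 n1 n2 n3 > 0" "gcd (delta1 n1 n2 n3) (delta3 n1 n2 n3) = 1"
  shows "fst (mu n1 n2 n3 i) * delta1 n1 n2 n3 + snd (mu n1 n2 n3 i) * delta3 n1 n2 n3 = i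
     \<and> 0 < fst (mu n1 n2 n3 i) \<and> fst (mu n1 n2 n3 i) \<le> delta3 n1 n2 n3"
proof -
  define D1 where "D1 = delta1 n1 n2 n3"
  define D3 where "D3 = delta3 n1 n2 n3"
  have a: "D3 > 0" "D1 > 0" "gcd D3 D1 = 1" using assms unfolding D1_def D3_def by (auto simp: gcd.commute)
  obtain b a where ab0: "b*D3 + a*D1 = i" "0 < a" "a \<le> D3"
    using bez_exists[OF a, of i] by blast
  have ab: "a*D1 + b*D3 = i" "0 < a" "a \<le> D3" using ab0 by (auto simp: algebra_simps)
  have "\<exists>!p. case p of (a, b) \<Rightarrow> a*D1 + b*D3 = i \<and> 0 < a \<and> a \<le> D3"
  proof (rule ex1I[of _ "(a,b)"])
    show "case (a,b) of (a, b) \<Rightarrow> a*D1 + b*D3 = i \<and> 0 < a \<and> a \<le> D3" using ab by (simp add: algebra_simps)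
    fix p :: "int \<times> int"
    assume h: "case p of (a, b) \<Rightarrow> a*D1 + b*D3 = i \<and> 0 < a \<and> a \<le> D3"
    obtain u v where p: "p = (u,v)" by (cases p)
    have "v = b \<and> u = a" using h ab unfolding p by (intro bez_unique[OF a(1) a(3)]) (auto simp: algebra_simps)
    thus "p = (a,b)" using p by simp
  qed
  hence "case mu n1 n2 n3 i of (a, b) \<Rightarrow> a*D1 + b*D3 = i \<and> 0 < a \<and> a \<le> D3"
    unfolding mu_def D1_def D3_def by (rule theI')
  thus ?thesis unfolding D1_def D3_def by (auto split: prod.splits)
qed

lemma sign3:
  fixes z1 z2 z3 N1 N2 N3 :: int
  assumes "0 < N1" "N1 \<le> N2" "N2 \<le> N3" "z1*N1 + z2*N2 + z3*N3 = 0" "z1+z2+z3 > 0"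
  shows "z2 \<ge> 0 \<Longrightarrow> z3 < 0" "z2 \<le> 0 \<Longrightarrow> z1 > 0"
proof -
  have p1: "(z1+z2+z3)*N1 > 0" "(z1+z2+z3)*N3 > 0" using assms by auto
  show "z3 < 0" if "z2 \<ge> 0"
  proof (rule ccontr)
    assume "\<not> z3 < 0"
    have "z2*N1 \<le> z2*N2" using that assms by (intro mult_left_mono) auto
    moreover have "z3*N1 \<le> z3*N3" using \<open>\<not> z3 < 0\<close> assms by (intro mult_left_mono) auto
    ultimately show False using p1(1) assms(4) by (simp add: algebra_simps)
  qed
  show "z1 > 0" if "z2 \<le> 0"
  proof (rule ccontr)
    assume "\<not> z1 > 0"
    have "z2*N3 \<le> z2*N2" using that assms by (intro mult_left_mono_neg) auto
    moreover have "z1*N3 \<le> z1*N1" using \<open>\<not> z1 > 0\<close> assms by (intro mult_left_mono_neg) auto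
    ultimately show False using p1(2) assms(4) by (simp add: algebra_simps)
  qed
qed

lemma choose_lemma:
  fixes u1 u2 u3 v1 v2 v3 :: int
  assumes "(u2 \<ge> 0 \<and> v2 \<ge> 0 \<and> u3 \<le> 0 \<and> v3 \<le> 0) \<or> (u1 \<ge> 0 \<and> v1 \<ge> 0 \<and> u2 \<le> 0 \<and> v2 \<le> 0)"
  shows "le3 (negpart (u1,u2,u3)) (negpart (u1+v1,u2+v2,u3+v3)) \<or> le3 (negpart (v1,v2,v3)) (negpart (u1+v1,u2+v2,u3+v3))"
  using assms unfolding le3_def negpart_def by auto



lemma tau_pair: "tau n1 n2 n3 (a,b) = (a * c1 n1 n2 n3 + b * r31 n1 n2 n3,
      - a * r12 n1 n2 n3 + b * r32 n1 n2 n3, - a * r13 n1 n2 n3 - b * c3 n1 n2 n3)"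
  unfolding tau_def by simp

theorem lemma2p13:
  fixes n1 n2 n3 :: nat and x :: "int \<Rightarrow> int \<times> int" and i :: int
  assumes "0 < n1" and "n1 < n2" and "n2 < n3"
    and "gcd (gcd n1 n2) n3 = 1"
    and "min_generated n1 n2 n3"
    and "\<not> symmetric_sg (sgp3 n1 n2 n3)"
    and "gcd (delta1 n1 n2 n3) (delta3 n1 n2 n3) = 1"
    and "x \<in> {lam n1 n2 n3, mu n1 n2 n3}"
    and "1 \<le> i" and "i \<le> max (delta1 n1 n2 n3) (delta3 n1 n2 n3)"
    and "reducible (max (delta1 n1 n2 n3) (delta3 n1 n2 n3)) x i"
  shows "\<exists>l. 0 < l \<and> l < i \<and>
           le3 (negpart (tau n1 n2 n3 (x l))) (negpart (tau n1 n2 n3 (x i)))"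
proof -
  have ok1: "ok n1 n2 n3" unfolding ok_def using assms by auto
  have ok3: "ok n3 n1 n2" using ok_perm1[OF ok_perm2[OF ok1]] .
  note rf1 = rr_facts[OF ok1]
  note rf3 = rr_facts[OF ok3]
  define C1 where "C1 = c1 n1 n2 n3"
  define C3 where "C3 = c3 n1 n2 n3"
  define R12 where "R12 = r12 n1 n2 n3"
  define R13 where "R13 = r13 n1 n2 n3"
  define R31 where "R31 = r31 n1 n2 n3"
  define R32 where "R32 = r32 n1 n2 n3"
  define N1 where "N1 = int n1"
  define N2 where "N2 = int n2"
  define N3 where "N3 = int n3"
  define D1 where "D1 = delta1 n1 n2 n3"
  define D3 where "D3 = delta3 n1 n2 n3"
  define M where "M = max D1 D3"
  have D1e: "D1 = C1 - R12 - R13" unfolding D1_def delta1_def C1_def R12_def R13_def ..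
  have D3e: "D3 = R31 + R32 - C3" unfolding D3_def delta3_def C3_def R31_def R32_def ..
  have rel1: "C1*N1 = R12*N2 + R13*N3"
  proof -
    have "int (cc n1 n2 n3 * n1) = int (fst (rr n1 n2 n3) * n2 + snd (rr n1 n2 n3) * n3)"
      using rf1(3) by simp
    thus ?thesis unfolding C1_def R12_def R13_def N1_def N2_def N3_def c1_def r12_def r13_def by simp
  qed
  have rel3: "C3*N3 = R31*N1 + R32*N2"
  proof -
    have "int (cc n3 n1 n2 * n3) = int (fst (rr n3 n1 n2) * n1 + snd (rr n3 n1 n2) * n2)"
      using rf3(3) by simp
    thus ?thesis unfolding C3_def R31_def R32_def N1_def N2_def N3_def c3_def r31_def r32_def by simp
  qed
  have Rpos: "R12 > 0" "R13 > 0" "R31 > 0" "R32 > 0"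
    using rf1 rf3 unfolding R12_def R13_def R31_def R32_def r12_def r13_def r31_def r32_def by auto
  have Npos: "0 < N1" "N1 < N2" "N2 < N3" unfolding N1_def N2_def N3_def using assms by auto
  have D1p: "D1 > 0"
  proof -
    have "R12*N1 \<le> R12*N2" using Rpos Npos by (intro mult_left_mono) auto
    moreover have "R13*N1 < R13*N3" using Rpos Npos by (intro mult_strict_left_mono) auto
    ultimately have "(C1 - R12 - R13)*N1 > 0" using rel1 by (simp add: algebra_simps)
    thus ?thesis using Npos D1e by (simp add: zero_less_mult_iff)
  qed
  have D3p: "D3 > 0"
  proof -
    have "R32*N2 \<le> R32*N3" using Rpos Npos by (intro mult_left_mono) auto
    moreover have "R31*N1 < R31*N3" using Rpos Npos by (intro mult_strict_left_mono) auto
    ultimately have "(R31 + R32 - C3)*N3 > 0" using rel3 by (simp add: algebra_simps)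
    thus ?thesis using Npos D3e by (simp add: zero_less_mult_iff)
  qed
  have gc: "gcd D1 D3 = 1" using assms(7) unfolding D1_def D3_def .
  have taue: "tau n1 n2 n3 (a,b) = (a*C1 + b*R31, -a*R12 + b*R32, -a*R13 - b*C3)" for a b
    unfolding tau_pair C1_def C3_def R12_def R13_def R31_def R32_def ..
  have relz: "(a*C1 + b*R31)*N1 + (-a*R12 + b*R32)*N2 + (-a*R13 - b*C3)*N3 = 0" for a b
  proof -
    have "(a*C1 + b*R31)*N1 + (-a*R12 + b*R32)*N2 + (-a*R13 - b*C3)*N3
        = a*(C1*N1 - R12*N2 - R13*N3) + b*(R31*N1 + R32*N2 - C3*N3)" by (simp add: algebra_simps)
    thus ?thesis using rel1 rel3 by simp
  qed
  have sumz: "(a*C1 + b*R31) + (-a*R12 + b*R32) + (-a*R13 - b*C3) = a*D1 + b*D3" for a b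
    unfolding D1e D3e by (simp add: algebra_simps)
  have xeq: "fst (x m) * D1 + snd (x m) * D3 = m" for m
    using assms(8) lam_facts[OF D1p[unfolded D1_def] D3p[unfolded D3_def] assms(7), of m]
      mu_facts[OF D1p[unfolded D1_def] D3p[unfolded D3_def] assms(7), of m]
    unfolding D1_def D3_def by auto
  have signs: "(x = lam n1 n2 n3 \<longrightarrow> 0 \<le> -fst (x m)*R12 + snd (x m)*R32 \<and> -fst (x m)*R13 - snd (x m)*C3 \<le> 0)
     \<and> (x \<noteq> lam n1 n2 n3 \<longrightarrow> 0 \<le> fst (x m)*C1 + snd (x m)*R31 \<and> -fst (x m)*R12 + snd (x m)*R32 \<le> 0)"
    if m: "1 \<le> m" "m \<le> M" for m
  proof -
    obtain a b where xm: "x m = (a,b)" by (cases "x m")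
    have e: "a*D1 + b*D3 = m" using xeq[of m] xm by simp
    have rz: "(a*C1 + b*R31)*N1 + (-a*R12 + b*R32)*N2 + (-a*R13 - b*C3)*N3 = 0" by (rule relz)
    have sz: "(a*C1 + b*R31) + (-a*R12 + b*R32) + (-a*R13 - b*C3) > 0" using sumz[of a b] e m by simp
    note sg = sign3[OF Npos(1) less_imp_le[OF Npos(2)] less_imp_le[OF Npos(3)] rz sz]
    show ?thesis
    proof (cases "x = lam n1 n2 n3")
      case True
      have bb: "0 < b" "b \<le> D1" using lam_facts[OF D1p[unfolded D1_def] D3p[unfolded D3_def] assms(7), of m]
        True xm unfolding D1_def by auto
      have "a \<le> 0"
      proof (rule ccontr)
        assume "\<not> a \<le> 0"
        hence "a*D1 \<ge> D1" using D1p by simp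
        moreover have "b*D3 \<ge> D3" using bb D3p by simp
        ultimately show False using e m unfolding M_def using D1p D3p by linarith
      qed
      have z2: "0 \<le> -a*R12 + b*R32"
      proof -
        have "0 \<le> (-a)*R12" using \<open>a \<le> 0\<close> Rpos by (simp add: mult_nonpos_nonneg)
        moreover have "0 \<le> b*R32" using bb Rpos by simp
        ultimately show ?thesis by simp
      qed
      have "-a*R13 - b*C3 < 0" using sg(1)[OF z2] .
      thus ?thesis using z2 True xm by simp
    next
      case False
      hence xmu: "x = mu n1 n2 n3" using assms(8) by simp
      have aa: "0 < a" "a \<le> D3" using mu_facts[OF D1p[unfolded D1_def] D3p[unfolded D3_def] assms(7), of m]
        xmu xm unfolding D3_def by auto
      have "b \<le> 0"
      proof (rule ccontr)
        assume "\<not> b \<le> 0"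
        hence "b*D3 \<ge> D3" using D3p by simp
        moreover have "a*D1 \<ge> D1" using aa D1p by simp
        ultimately show False using e m unfolding M_def using D1p D3p by linarith
      qed
      have z2: "-a*R12 + b*R32 \<le> 0"
      proof -
        have "(-a)*R12 \<le> 0" using aa Rpos by (simp add: mult_nonpos_nonneg)
        moreover have "b*R32 \<le> 0" using \<open>b \<le> 0\<close> Rpos by (simp add: mult_nonpos_nonneg)
        ultimately show ?thesis by simp
      qed
      have "a*C1 + b*R31 > 0" using sg(2)[OF z2] .
      thus ?thesis using z2 False xm by simp
    qed
  qed
  obtain j k where jk: "j \<in> {1..M}" "k \<in> {1..M}" "fst (x i) = fst (x j) + fst (x k)"
      "snd (x i) = snd (x j) + snd (x k)"
    using assms(11) unfolding reducible_def M_def D1_def D3_def by blast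
  have "i = j + k"
  proof -
    have "i = fst (x i) * D1 + snd (x i) * D3" using xeq[of i] by simp
    also have "\<dots> = (fst (x j) * D1 + snd (x j) * D3) + (fst (x k) * D1 + snd (x k) * D3)"
      using jk(3,4) by (simp add: algebra_simps)
    also have "\<dots> = j + k" using xeq[of j] xeq[of k] by simp
    finally show ?thesis .
  qed
  hence jki: "0 < j" "j < i" "0 < k" "k < i" using jk(1,2) by auto
  obtain a1 b1 where x1: "x j = (a1,b1)" by (cases "x j")
  obtain a2 b2 where x2: "x k = (a2,b2)" by (cases "x k")
  have xi: "x i = (a1+a2, b1+b2)" using jk(3,4) x1 x2 by (simp add: prod_eq_iff)
  have sj: "(x = lam n1 n2 n3 \<longrightarrow> 0 \<le> -a1*R12 + b1*R32 \<and> -a1*R13 - b1*C3 \<le> 0)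
     \<and> (x \<noteq> lam n1 n2 n3 \<longrightarrow> 0 \<le> a1*C1 + b1*R31 \<and> -a1*R12 + b1*R32 \<le> 0)"
    using signs[of j, unfolded x1 fst_conv snd_conv] jk(1) by simp
  have sk: "(x = lam n1 n2 n3 \<longrightarrow> 0 \<le> -a2*R12 + b2*R32 \<and> -a2*R13 - b2*C3 \<le> 0)
     \<and> (x \<noteq> lam n1 n2 n3 \<longrightarrow> 0 \<le> a2*C1 + b2*R31 \<and> -a2*R12 + b2*R32 \<le> 0)"
    using signs[of k, unfolded x2 fst_conv snd_conv] jk(2) by simp
  have cond: "((-a1*R12 + b1*R32) \<ge> 0 \<and> (-a2*R12 + b2*R32) \<ge> 0 \<and> (-a1*R13 - b1*C3) \<le> 0 \<and> (-a2*R13 - b2*C3) \<le> 0)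
      \<or> ((a1*C1 + b1*R31) \<ge> 0 \<and> (a2*C1 + b2*R31) \<ge> 0 \<and> (-a1*R12 + b1*R32) \<le> 0 \<and> (-a2*R12 + b2*R32) \<le> 0)"
  proof (cases "x = lam n1 n2 n3")
    case True thus ?thesis using sj sk by auto
  next
    case False thus ?thesis using sj sk by auto
  qed
  have tsum: "tau n1 n2 n3 (x i) = ((a1*C1 + b1*R31) + (a2*C1 + b2*R31),
      (-a1*R12 + b1*R32) + (-a2*R12 + b2*R32), (-a1*R13 - b1*C3) + (-a2*R13 - b2*C3))"
    unfolding xi taue by (simp add: algebra_simps)
  have "le3 (negpart (tau n1 n2 n3 (x j))) (negpart (tau n1 n2 n3 (x i)))
      \<or> le3 (negpart (tau n1 n2 n3 (x k))) (negpart (tau n1 n2 n3 (x i)))"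
    unfolding tsum x1 x2 taue by (rule choose_lemma[OF cond])
  thus ?thesis using jki by blast
qed


end
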